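(* Let $p$ be a prime and $j,a,b\in\mathbb{N}$. Then \[c_j(p^{a+b})=\sum_{k=0}^{j-1}(-1)^{k-j+1}\binom{j}{k+1} d_{k+1}(p^b)\,\frac{(b+k+1)^{\overline a}}{(b+1)^{\overline a}}.\]
   Context: For $j,n\in\mathbb{N}$, $d_j(n)$ is the number of ordered $j$-tuples of positive integers with product $n$, and $c_j(n)$ is the number of ordered $j$-tuples of integers each $\ge 2$ with product $n$. The rising factorial is $x^{\overline a}=\prod_{i=0}^{a-1}(x+i)$. *)

theory Defs
  imports Complex_Main "HOL-Computational_Algebra.Primes"
begin

definition dfun :: "nat \<Rightarrow> nat \<Rightarrow> nat" where
  "dfun j n = card {xs :: nat list. length xs = j \<and> (\<forall>x\<in>set xs. x \<ge> 1) \<and> prod_list xs = n}"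

definition cfun :: "nat \<Rightarrow> nat \<Rightarrow> nat" where
  "cfun j n = card {xs :: nat list. length xs = j \<and> (\<forall>x\<in>set xs. x \<ge> 2) \<and> prod_list xs = n}"

end

theory Submission
  imports Defs
begin

lemma poch_fact: "fact (n + m) = (fact n :: real) * pochhammer (real n + 1) m"
  using pochhammer_product'[of "1::real" n m] by (simp add: pochhammer_fact add.commute)

lemma W_set_Suc:
  "{es::nat list. length es = Suc m \<and> sum_list es = n} =
   (\<Union>e\<in>{..n}. (\<lambda>es. e # es) ` {es. length es = m \<and> sum_list es = n - e})"
proof (rule set_eqI, rule iffI)
  fix xs assume "xs \<in> {es::nat list. length es = Suc m \<and> sum_list es = n}"
  then obtain e es where "xs = e # es" "length es = m" "e + sum_list es = n"
    by (cases xs) auto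
  then show "xs \<in> (\<Union>e\<in>{..n}. (\<lambda>es. e # es) ` {es. length es = m \<and> sum_list es = n - e})"
    by (intro UN_I[of e]) auto
qed auto

lemma W_card: "card {es::nat list. length es = Suc m \<and> sum_list es = n} = (n + m) choose n"
proof (induction m arbitrary: n)
  case 0
  have "{es::nat list. length es = Suc 0 \<and> sum_list es = n} = {[n]}"
    by (auto simp: length_Suc_conv)
  then show ?case by simp
next
  case (Suc m)
  have fin: "finite {es::nat list. length es = Suc m \<and> sum_list es = k}" for k
  proof -
    have "{es::nat list. length es = Suc m \<and> sum_list es = k} \<subseteq> {es. set es \<subseteq> {..k} \<and> length es = Suc m}"
      by (auto simp: member_le_sum_list)
    moreover have "finite {es. set es \<subseteq> {..k::nat} \<and> length es = Suc m}"
      by (rule finite_lists_length_eq) simp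
    ultimately show ?thesis by (rule finite_subset)
  qed
  have "card {es::nat list. length es = Suc (Suc m) \<and> sum_list es = n}
     = (\<Sum>e\<le>n. card ((\<lambda>es. e # es) ` {es. length es = Suc m \<and> sum_list es = n - e}))"
    apply (subst W_set_Suc)
    by (rule card_UN_disjoint) (auto intro: fin)
  also have "\<dots> = (\<Sum>e\<le>n. (n - e + m) choose (n - e))"
    by (rule sum.cong) (auto simp: card_image Suc.IH)
  also have "\<dots> = (\<Sum>k\<le>n. (m + k) choose k)"
    by (rule sum.reindex_bij_witness[where i="\<lambda>k. n - k" and j="\<lambda>k. n - k"]) (auto simp: add.commute)
  also have "\<dots> = (n + Suc m) choose n" by (simp add: sum_choose_lower add.commute[of m n])
  finally show ?case .
qed

lemma prod_list_map_power: "prod_list (map (\<lambda>e. p ^ e) es) = (p::nat) ^ sum_list es"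
  by (induction es) (auto simp: power_add)

lemma pp_list:
  assumes "prime (p::nat)"
  shows "prod_list xs = p ^ n \<Longrightarrow> \<exists>es. xs = map (\<lambda>e. p ^ e) es \<and> sum_list es = n"
proof (induction xs arbitrary: n)
  case Nil
  have "p > 1" using assms prime_gt_1_nat by blast
  have "p ^ n = 1" using Nil.prems by simp
  with \<open>p > 1\<close> have "n = 0" by (metis One_nat_def less_not_refl nat_power_eq_Suc_0_iff)
  then show ?case by simp
next
  case (Cons x xs)
  have "p > 0" using assms prime_gt_0_nat by blast
  have "x dvd p ^ n" using Cons.prems by (metis dvd_triv_left prod_list.Cons)
  then obtain i where i: "i \<le> n" "x = p ^ i" using divides_primepow_nat[OF assms] by blast
  have "p ^ i * prod_list xs = p ^ i * p ^ (n - i)"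
    using Cons.prems i by (simp add: power_add[symmetric])
  then have "prod_list xs = p ^ (n - i)" using \<open>p > 0\<close> by simp
  from Cons.IH[OF this] obtain es where "xs = map (\<lambda>e. p ^ e) es" "sum_list es = n - i" by blast
  then show ?case using i by (intro exI[of _ "i # es"]) auto
qed

lemma inj_map_power: "(p::nat) > 1 \<Longrightarrow> inj_on (map (\<lambda>e. p ^ e)) A"
  by (rule inj_on_subset[OF _ subset_UNIV], rule inj_mapI) (auto simp: inj_on_def)

lemma dfun_pp:
  assumes "prime p"
  shows "dfun (Suc m) (p ^ n) = (n + m) choose n"
proof -
  have p1: "p > 1" using assms prime_gt_1_nat by blast
  have "{xs :: nat list. length xs = Suc m \<and> (\<forall>x\<in>set xs. x \<ge> 1) \<and> prod_list xs = p ^ n}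
        = map (\<lambda>e. p ^ e) ` {es. length es = Suc m \<and> sum_list es = n}"
  proof (rule set_eqI, rule iffI)
    fix xs assume "xs \<in> {xs :: nat list. length xs = Suc m \<and> (\<forall>x\<in>set xs. x \<ge> 1) \<and> prod_list xs = p ^ n}"
    then show "xs \<in> map (\<lambda>e. p ^ e) ` {es. length es = Suc m \<and> sum_list es = n}"
      using pp_list[OF assms, of xs n] by auto
  next
    fix xs assume "xs \<in> map (\<lambda>e. p ^ e) ` {es. length es = Suc m \<and> sum_list es = n}"
    then show "xs \<in> {xs :: nat list. length xs = Suc m \<and> (\<forall>x\<in>set xs. x \<ge> 1) \<and> prod_list xs = p ^ n}"
      using p1 by (auto simp: prod_list_map_power)
  qed
  then show ?thesis unfolding dfun_def
    using card_image[OF inj_map_power[OF p1]] W_card by simp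
qed

lemma len_le_sum: "\<forall>e\<in>set es. (e::nat) \<ge> 1 \<Longrightarrow> length es \<le> sum_list es"
  by (induction es) auto

lemma map_Suc_pred: "\<forall>e\<in>set es. (e::nat) \<ge> 1 \<Longrightarrow> es = map Suc (map (\<lambda>e. e - 1) es)"
  by (induction es) auto

lemma sum_map_Suc: "sum_list (map Suc es) = sum_list es + length es"
  by (induction es) auto

lemma cfun_pp:
  assumes "prime p" "j \<ge> 1" "n \<ge> 1"
  shows "cfun j (p ^ n) = (n - 1) choose (j - 1)"
proof -
  have p1: "p > 1" using assms prime_gt_1_nat by blast
  have ge2: "(2 \<le> p ^ e) = (e \<ge> 1)" for e
  proof
    assume "2 \<le> p ^ e" then show "e \<ge> 1" by (cases e) auto
  next
    assume "e \<ge> 1" then have "p ^ 1 \<le> p ^ e" using p1 by (intro power_increasing) auto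
    then show "2 \<le> p ^ e" using p1 by simp
  qed
  have S: "{xs :: nat list. length xs = j \<and> (\<forall>x\<in>set xs. x \<ge> 2) \<and> prod_list xs = p ^ n}
        = map (\<lambda>e. p ^ e) ` {es. length es = j \<and> (\<forall>e\<in>set es. e \<ge> 1) \<and> sum_list es = n}"
  proof (rule set_eqI, rule iffI)
    fix xs assume "xs \<in> {xs :: nat list. length xs = j \<and> (\<forall>x\<in>set xs. x \<ge> 2) \<and> prod_list xs = p ^ n}"
    then show "xs \<in> map (\<lambda>e. p ^ e) ` {es. length es = j \<and> (\<forall>e\<in>set es. e \<ge> 1) \<and> sum_list es = n}"
      using pp_list[OF assms(1), of xs n] ge2 by auto
  next
    fix xs assume "xs \<in> map (\<lambda>e. p ^ e) ` {es. length es = j \<and> (\<forall>e\<in>set es. e \<ge> 1) \<and> sum_list es = n}"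
    then show "xs \<in> {xs :: nat list. length xs = j \<and> (\<forall>x\<in>set xs. x \<ge> 2) \<and> prod_list xs = p ^ n}"
      using ge2 by (auto simp: prod_list_map_power)
  qed
  have C: "cfun j (p ^ n) = card {es. length es = j \<and> (\<forall>e\<in>set es. e \<ge> 1) \<and> sum_list es = n}"
    unfolding cfun_def S using card_image[OF inj_map_power[OF p1]] by simp
  show ?thesis
  proof (cases "j \<le> n")
    case True
    have T: "{es. length es = j \<and> (\<forall>e\<in>set es. e \<ge> 1) \<and> sum_list es = n}
          = map Suc ` {es. length es = j \<and> sum_list es = n - j}"
    proof (rule set_eqI, rule iffI)
      fix xs assume xs: "xs \<in> {es. length es = j \<and> (\<forall>e\<in>set es. e \<ge> 1) \<and> sum_list es = n}"
      define ys where "ys = map (\<lambda>e. e - 1) xs"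
      have e: "xs = map Suc ys" unfolding ys_def using xs by (intro map_Suc_pred) simp
      have "sum_list xs = sum_list ys + length ys" by (simp only: e sum_map_Suc)
      moreover have "length ys = j" using xs by (simp add: ys_def)
      moreover have "sum_list xs = n" using xs by simp
      ultimately have "sum_list ys = n - j" by linarith
      then show "xs \<in> map Suc ` {es. length es = j \<and> sum_list es = n - j}"
        using e \<open>length ys = j\<close> by blast
    next
      fix xs assume "xs \<in> map Suc ` {es. length es = j \<and> sum_list es = n - j}"
      then show "xs \<in> {es. length es = j \<and> (\<forall>e\<in>set es. e \<ge> 1) \<and> sum_list es = n}"
        using True by (auto simp: sum_map_Suc)
    qed
    have "card (map Suc ` {es. length es = j \<and> sum_list es = n - j}) = card {es. length es = Suc (j - 1) \<and> sum_list es = n - j}"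
      using assms(2) by (subst card_image) (auto intro: inj_on_subset[OF inj_mapI] simp: inj_on_def)
    also have "\<dots> = (n - j + (j - 1)) choose (n - j)" by (rule W_card)
    also have "\<dots> = (n - 1) choose ((n - 1) - (j - 1))"
      using True assms(2) by (simp add: Suc_diff_le)
    also have "\<dots> = (n - 1) choose (j - 1)"
      using True by (intro binomial_symmetric[symmetric]) simp
    finally show ?thesis using C T by simp
  next
    case False
    have "{es. length es = j \<and> (\<forall>e\<in>set es. e \<ge> 1) \<and> sum_list es = n} = {}"
      using len_le_sum False by fastforce
    then have "cfun j (p ^ n) = 0" using C by (simp only: card.empty)
    moreover have "(n - 1) choose (j - 1) = 0" using False assms(3) by simp
    ultimately show ?thesis by simp
  qed
qed


definition H :: "nat \<Rightarrow> nat \<Rightarrow> nat \<Rightarrow> real" where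
  "H j n s = (\<Sum>i\<le>j. (-1)^i * real (j choose i) * real ((s + i) choose n))"

lemma H_rec: "H (Suc j) n s = H j n s - H j n (Suc s)"
proof -
  define f where "f i = real ((s + i) choose n)" for i
  define B where "B = (\<Sum>i\<le>j. (-1)^i * real (j choose Suc i) * f (Suc i))"
  have "H (Suc j) n s = f 0 + (\<Sum>i\<le>j. (-1)^Suc i * real (Suc j choose Suc i) * f (Suc i))"
    unfolding H_def f_def by (subst sum.atMost_Suc_shift) simp
  also have "\<dots> = f 0 - (\<Sum>i\<le>j. (-1)^i * real (j choose i) * f (Suc i)) - B"
    unfolding B_def by (simp add: sum_subtractf[symmetric] sum.distrib[symmetric] algebra_simps sum_negf[symmetric])
  also have "(\<Sum>i\<le>j. (-1)^i * real (j choose i) * f (Suc i)) = H j n (Suc s)"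
    unfolding H_def f_def by simp
  finally have 1: "H (Suc j) n s = f 0 - H j n (Suc s) - B" .
  have "H j n s = (\<Sum>i\<le>Suc j. (-1)^i * real (j choose i) * f i)"
    unfolding H_def f_def by simp
  also have "\<dots> = f 0 - B"
    unfolding B_def by (subst sum.atMost_Suc_shift) (simp add: sum_negf[symmetric])
  finally show ?thesis using 1 by (simp add: algebra_simps)
qed

lemma H_closed: "H j n s = (-1)^j * (if j \<le> n then real (s choose (n - j)) else 0)"
proof (induction j arbitrary: n s)
  case 0
  then show ?case by (simp add: H_def)
next
  case (Suc j)
  show ?case
  proof (cases "Suc j \<le> n")
    case True
    then have "n - j = Suc (n - Suc j)" by simp
    then show ?thesis using True by (simp add: H_rec Suc.IH algebra_simps)
  next
    case False
    have "H j n s = H j n (Suc s)" using Suc.IH[of n s] Suc.IH[of n "Suc s"] False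
      by (cases "j = n") auto
    then show ?thesis using False by (simp add: H_rec)
  qed
qed


lemma sign_lemma:
  assumes "k \<le> j - 1" "j \<ge> 1"
  shows "(-1::real) powi (int k - int j + 1) = (-1)^j * (-1)^(k+1)"
proof -
  define m where "m = j - 1 - k"
  have j: "j = m + (k + 1)" using assms unfolding m_def by simp
  have "int k - int j + 1 = - int m" using j by simp
  then have "(-1::real) powi (int k - int j + 1) = (-1)^m"
    by (simp add: power_int_minus power_int_of_nat flip: power_inverse)
  also have "\<dots> = (-1)^j * (-1)^(k+1)"
  proof -
    have sq: "(-1::real)^(k+1) * (-1)^(k+1) = 1" by (simp flip: power_mult_distrib)
    have "(-1::real)^j * (-1)^(k+1) = (-1)^m * ((-1)^(k+1) * (-1)^(k+1))"
      unfolding j power_add by (simp only: mult.assoc)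
    then show ?thesis using sq by simp
  qed
  finally show ?thesis .
qed

lemma ratio_lemma:
  "real ((b + k) choose b) * (pochhammer (real (b + k + 1)) a / pochhammer (real (b + 1)) a)
   = real ((a + b + k) choose (a + b))"
proof -
  have f1: "fact (b + k + a) = (fact (b + k) :: real) * pochhammer (real (b + k + 1)) a"
    using poch_fact[of "b + k" a] by (simp add: add_ac)
  have f2: "fact (b + a) = (fact b :: real) * pochhammer (real (b + 1)) a"
    using poch_fact[of b a] by (simp add: add_ac)
  have c1: "real ((b + k) choose b) = fact (b + k) / (fact b * fact k)"
    by (subst binomial_fact) auto
  have c2: "real ((a + b + k) choose (a + b)) = fact (a + b + k) / (fact (a + b) * fact k)"
    by (subst binomial_fact) auto
  have p1: "pochhammer (real (b + k + 1)) a = fact (b + k + a) / fact (b + k)"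
    using f1 by (simp add: field_simps)
  have p2: "pochhammer (real (b + 1)) a = fact (b + a) / fact b"
    using f2 by (simp add: field_simps)
  show ?thesis unfolding c1 c2 p1 p2
    by (simp add: field_simps add.commute add.left_commute)
qed


theorem lemma10:
  fixes p j a b :: nat
  assumes "prime p" and "j \<ge> 1" and "a \<ge> 1" and "b \<ge> 1"
  shows "real (cfun j (p ^ (a + b))) =
    (\<Sum>k = 0..j - 1. (-1::real) powi (int k - int j + 1) * real (j choose (k + 1))
       * real (dfun (k + 1) (p ^ b))
       * (pochhammer (real (b + k + 1)) a / pochhammer (real (b + 1)) a))"
proof -
  define N where "N = a + b"
  have N1: "N \<ge> 1" using assms unfolding N_def by simp
  have L: "real (cfun j (p ^ (a + b))) = real ((N - 1) choose (j - 1))"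
    using cfun_pp[OF assms(1,2) N1] unfolding N_def by simp
  have Hc: "H j N (N - 1) = (-1)^j * real ((N - 1) choose (j - 1))"
  proof (cases "j \<le> N")
    case True
    have "(N - 1) choose (N - j) = (N - 1) choose ((N - 1) - (j - 1))"
      using True assms(2) by (simp add: Suc_diff_le)
    also have "\<dots> = (N - 1) choose (j - 1)"
      using True by (intro binomial_symmetric[symmetric]) simp
    finally show ?thesis using True by (simp add: H_closed)
  next
    case False
    then show ?thesis using N1 by (simp add: H_closed)
  qed
  have jS: "j = Suc (j - 1)" using assms(2) by simp
  have "H j N (N - 1) = (\<Sum>i\<le>Suc (j - 1). (-1)^i * real (j choose i) * real ((N - 1 + i) choose N))"
    unfolding H_def using jS by simp
  also have "\<dots> = (\<Sum>k\<le>j - 1. (-1)^(k+1) * real (j choose (k+1)) * real ((N + k) choose N))"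
    by (subst sum.atMost_Suc_shift) (use N1 in simp)
  finally have Hs: "H j N (N - 1) = (\<Sum>k\<le>j - 1. (-1)^(k+1) * real (j choose (k+1)) * real ((N + k) choose N))" .
  have "(\<Sum>k = 0..j - 1. (-1::real) powi (int k - int j + 1) * real (j choose (k + 1))
       * real (dfun (k + 1) (p ^ b))
       * (pochhammer (real (b + k + 1)) a / pochhammer (real (b + 1)) a))
     = (\<Sum>k\<le>j - 1. (-1)^j * ((-1)^(k+1) * real (j choose (k+1)) * real ((N + k) choose N)))"
  proof (rule sum.cong)
    show "{0..j - 1} = {..j - 1}" by auto
  next
    fix k assume k: "k \<in> {..j - 1}"
    have kk: "k \<le> j - 1" using k by simp
    have d: "dfun (k + 1) (p ^ b) = (b + k) choose b" using dfun_pp[OF assms(1), of k b] by simp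
    show "(-1::real) powi (int k - int j + 1) * real (j choose (k + 1))
       * real (dfun (k + 1) (p ^ b))
       * (pochhammer (real (b + k + 1)) a / pochhammer (real (b + 1)) a)
       = (-1)^j * ((-1)^(k+1) * real (j choose (k+1)) * real ((N + k) choose N))"
      unfolding d sign_lemma[OF kk assms(2)] N_def ratio_lemma[of b k a, symmetric]
      by (simp only: mult_ac)
  qed
  also have "\<dots> = (-1)^j * H j N (N - 1)" unfolding Hs by (simp add: sum_distrib_left)
  also have "\<dots> = real ((N - 1) choose (j - 1))" unfolding Hc by (simp flip: power_mult_distrib mult.assoc)
  finally show ?thesis using L by simp
qed

end
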